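(* Let $\mu,\nu$ be finite measures on $\mathbb R$ with finite first moments such that $\mu\le_E\nu$. Define $\beta=(\nu(\mathbb R)-\mu(\mathbb R))\,\delta_{\frac{\overline\nu-\overline\mu}{\nu(\mathbb R)-\mu(\mathbb R)}}$ (with $\beta$ the zero measure if $\nu(\mathbb R)=\mu(\mathbb R)$). Then $\nu-\mu\ge_{cx}\beta$, i.e. $\int f\,d\beta\le\int f\,d\nu-\int f\,d\mu$ for every convex $f:\mathbb R\to\mathbb R$. Consequently $P_\nu-P_\mu\ge P_\beta$, where $P_\beta(k)=\big((\nu(\mathbb R)-\mu(\mathbb R))k-(\overline\nu-\overline\mu)\big)^+$.
   Context: For a finite measure $\eta$ on $\mathbb R$ with finite first moment, $\overline\eta=\int x\,\eta(dx)$ and $P_\eta(k)=\int(k-x)^+\eta(dx)$. $\mu\le_E\nu$ means $\int f\,d\mu\le\int f\,d\nu$ for all non-negative convex $f:\mathbb R\to\mathbb R_+$. The convex order $\le_{cx}$ means comparison of integrals of all convex functions. *)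

theory Defs
  imports "HOL-Probability.Probability"
begin

definition mass :: "real measure \<Rightarrow> real" where
  "mass M = measure M UNIV"

definition bary :: "real measure \<Rightarrow> real" where
  "bary M = (\<integral>x. x \<partial>M)"

definition put_fun :: "real measure \<Rightarrow> real \<Rightarrow> real" where
  "put_fun M k = (\<integral>x. max (k - x) 0 \<partial>M)"

definition fin_meas_first_moment :: "real measure \<Rightarrow> bool" where
  "fin_meas_first_moment M \<longleftrightarrow>
     sets M = sets borel \<and> finite_measure M \<and> integrable M (\<lambda>x. x)"

definition le_E :: "real measure \<Rightarrow> real measure \<Rightarrow> bool" where
  "le_E \<mu> \<nu> \<longleftrightarrow>
     (\<forall>f::real \<Rightarrow> real. convex_on UNIV f \<and> (\<forall>x. 0 \<le> f x) \<longrightarrow>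
        (\<integral>\<^sup>+x. ennreal (f x) \<partial>\<mu>) \<le> (\<integral>\<^sup>+x. ennreal (f x) \<partial>\<nu>))"

definition beta_meas :: "real measure \<Rightarrow> real measure \<Rightarrow> real measure" where
  "beta_meas \<mu> \<nu> =
     (if mass \<nu> = mass \<mu> then null_measure borel
      else scale_measure (ennreal (mass \<nu> - mass \<mu>))
             (return borel ((bary \<nu> - bary \<mu>) / (mass \<nu> - mass \<mu>))))"

end

theory Submission
  imports Defs
begin

lemma fm_space: "fin_meas_first_moment M \<Longrightarrow> space M = UNIV"
  unfolding fin_meas_first_moment_def using sets_eq_imp_space_eq by fastforce

lemma fm_meas: "fin_meas_first_moment M \<Longrightarrow> f \<in> borel_measurable borel \<Longrightarrow> f \<in> borel_measurable M"
  unfolding fin_meas_first_moment_def using measurable_cong_sets by blast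

lemma fm_int_const: "fin_meas_first_moment M \<Longrightarrow> integrable M (\<lambda>x. c::real)"
  unfolding fin_meas_first_moment_def using finite_measure.integrable_const by blast

lemma fm_int_id: "fin_meas_first_moment M \<Longrightarrow> integrable M (\<lambda>x. x)"
  unfolding fin_meas_first_moment_def by blast

lemma fm_int_affine: assumes M: "fin_meas_first_moment M" shows "integrable M (\<lambda>x. a + s * x::real)"
  using fm_int_const[OF M] fm_int_id[OF M] by auto

lemma fm_integral_affine: assumes M: "fin_meas_first_moment M"
  shows "(\<integral>x. a + s * x \<partial>M) = a * mass M + s * bary M"
proof -
  have i1: "integrable M (\<lambda>x. a)" using fm_int_const[OF M] .
  have i2: "integrable M (\<lambda>x. s * x)" using fm_int_id[OF M] by auto
  have "(\<integral>x. a + s * x \<partial>M) = (\<integral>x. a \<partial>M) + (\<integral>x. s * x \<partial>M)"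
    by (rule Bochner_Integration.integral_add[OF i1 i2])
  also have "\<dots> = a * mass M + s * bary M"
    using fm_space[OF M] by (simp add: mass_def bary_def)
  finally show ?thesis .
qed

lemma le_int:
  assumes M: "fin_meas_first_moment \<mu>" and N: "fin_meas_first_moment \<nu>" and E: "le_E \<mu> \<nu>"
    and g: "convex_on UNIV g" "\<And>x. 0 \<le> g x" "integrable \<mu> g" "integrable \<nu> g"
  shows "(\<integral>x. g x \<partial>\<mu>) \<le> (\<integral>x. g x \<partial>\<nu>)"
proof -
  have "(\<integral>\<^sup>+x. ennreal (g x) \<partial>\<mu>) \<le> (\<integral>\<^sup>+x. ennreal (g x) \<partial>\<nu>)"
    using E g unfolding le_E_def by blast
  moreover have "(\<integral>\<^sup>+x. ennreal (g x) \<partial>\<mu>) = ennreal (\<integral>x. g x \<partial>\<mu>)"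
    using g by (intro nn_integral_eq_integral) auto
  moreover have "(\<integral>\<^sup>+x. ennreal (g x) \<partial>\<nu>) = ennreal (\<integral>x. g x \<partial>\<nu>)"
    using g by (intro nn_integral_eq_integral) auto
  ultimately show ?thesis
    using g by (simp add: ennreal_le_iff integral_nonneg_AE)
qed

lemma mass_le:
  assumes M: "fin_meas_first_moment \<mu>" and N: "fin_meas_first_moment \<nu>" and E: "le_E \<mu> \<nu>"
  shows "mass \<mu> \<le> mass \<nu>"
  using le_int[OF M N E, of "\<lambda>x. 1"] fm_int_const[OF M] fm_int_const[OF N] fm_space[OF M] fm_space[OF N]
  by (simp add: mass_def convex_on_const)

lemma subgrad:
  fixes f :: "real \<Rightarrow> real"
  assumes f: "convex_on UNIV f"
  shows "\<exists>s. \<forall>y. f c + s * (y - c) \<le> f y"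
proof -
  define L where "L = (\<lambda>x. (f c - f x) / (c - x)) ` {..<c}"
  have ne: "L \<noteq> {}" unfolding L_def by auto
  have lr: "(f c - f x) / (c - x) \<le> (f y - f c) / (y - c)" if "x < c" "c < y" for x y
  proof -
    have "(f x - f c) / (x - c) \<le> (f x - f y) / (x - y)"
      using convex_on_slope_le(1)[OF f _ _ that] by simp
    also have "\<dots> \<le> (f c - f y) / (c - y)"
      using convex_on_slope_le(2)[OF f _ _ that] by simp
    finally show ?thesis
      by (metis minus_divide_divide minus_diff_eq)
  qed
  have bdd: "bdd_above L" unfolding L_def
    using lr[of _ "c+1"] by (intro bdd_aboveI[of _ "(f (c+1) - f c) / (c + 1 - c)"]) auto
  define s where "s = Sup L"
  show ?thesis
  proof (intro exI allI)
    fix y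
    consider "y < c" | "y = c" | "y > c" by linarith
    then show "f c + s * (y - c) \<le> f y"
    proof cases
      case 1
      have "(f c - f y) / (c - y) \<le> s"
        unfolding s_def using bdd 1 by (intro cSup_upper) (auto simp: L_def)
      then have "f c - f y \<le> s * (c - y)" using 1 by (simp add: divide_le_eq)
      then show ?thesis by (simp add: algebra_simps)
    next
      case 2 then show ?thesis by simp
    next
      case 3
      have "s \<le> (f y - f c) / (y - c)"
        unfolding s_def using ne 3 lr by (intro cSup_least) (auto simp: L_def)
      then have "s * (y - c) \<le> f y - f c" using 3 by (simp add: le_divide_eq)
      then show ?thesis by (simp add: algebra_simps)
    qed
  qed
qed


lemma key:
  fixes f :: "real \<Rightarrow> real"
  assumes M: "fin_meas_first_moment \<mu>" and N: "fin_meas_first_moment \<nu>" and E: "le_E \<mu> \<nu>"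
    and f: "convex_on UNIV f" "integrable \<mu> f" "integrable \<nu> f"
    and sub: "\<And>y. f c + s * (y - c) \<le> f y"
  shows "f c * (mass \<nu> - mass \<mu>) + s * ((bary \<nu> - bary \<mu>) - c * (mass \<nu> - mass \<mu>))
         \<le> (\<integral>x. f x \<partial>\<nu>) - (\<integral>x. f x \<partial>\<mu>)"
proof -
  define a where "a = f c - s * c"
  define g where "g = (\<lambda>x. f x - (a + s * x))"
  have gnn: "\<And>x. 0 \<le> g x" using sub unfolding g_def a_def by (smt (verit, ccfv_SIG) right_diff_distrib)
  have "convex_on UNIV (\<lambda>x. - (a + s * x))"
    by (rule convex_onI) (auto simp: algebra_simps)
  then have aff: "concave_on UNIV (\<lambda>x. a + s * x)"
    unfolding concave_on_def by simp
  have gc: "convex_on UNIV g" unfolding g_def by (rule convex_on_diff[OF f(1) aff])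
  have gi: "integrable M g" if "fin_meas_first_moment M" "integrable M f" for M
    unfolding g_def by (intro Bochner_Integration.integrable_diff that(2) fm_int_affine[OF that(1)])
  have gI: "(\<integral>x. g x \<partial>M) = (\<integral>x. f x \<partial>M) - (a * mass M + s * bary M)"
    if "fin_meas_first_moment M" "integrable M f" for M
    unfolding g_def using fm_int_affine[OF that(1)] that(2) fm_integral_affine[OF that(1)]
    by (subst Bochner_Integration.integral_diff) auto
  have "(\<integral>x. g x \<partial>\<mu>) \<le> (\<integral>x. g x \<partial>\<nu>)"
    using le_int[OF M N E gc gnn gi[OF M f(2)] gi[OF N f(3)]] .
  then have "(\<integral>x. f x \<partial>\<mu>) - (a * mass \<mu> + s * bary \<mu>) \<le> (\<integral>x. f x \<partial>\<nu>) - (a * mass \<nu> + s * bary \<nu>)"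
    using gI[OF M f(2)] gI[OF N f(3)] by simp
  moreover have "f c * (mass \<nu> - mass \<mu>) + s * ((bary \<nu> - bary \<mu>) - c * (mass \<nu> - mass \<mu>))
     = (a * mass \<nu> + s * bary \<nu>) - (a * mass \<mu> + s * bary \<mu>)"
    unfolding a_def by (simp add: algebra_simps)
  ultimately show ?thesis by linarith
qed

lemma convex_max_aff: "convex_on UNIV (\<lambda>x::real. max (p * x + q) 0)"
proof (rule convex_onI)
  fix t x y :: real assume t: "0 < t" "t < 1"
  have e: "p * ((1 - t) *\<^sub>R x + t *\<^sub>R y) + q = (1 - t) * (p * x + q) + t * (p * y + q)"
    by (simp add: algebra_simps)
  have "(1 - t) * (p * x + q) \<le> (1 - t) * max (p * x + q) 0" using t by (intro mult_left_mono) auto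
  moreover have "t * (p * y + q) \<le> t * max (p * y + q) 0" using t by (intro mult_left_mono) auto
  moreover have "0 \<le> (1 - t) * max (p * x + q) 0" "0 \<le> t * max (p * y + q) 0" using t by auto
  ultimately show "max (p * ((1 - t) *\<^sub>R x + t *\<^sub>R y) + q) 0 \<le> (1 - t) * max (p * x + q) 0 + t * max (p * y + q) 0"
    unfolding e by linarith
qed simp

lemma convex_max_aff': "convex_on UNIV (\<lambda>x::real. max (p * x - q) 0)"
  using convex_max_aff[of p "-q"] by simp

lemma int_max_aff: assumes M: "fin_meas_first_moment M" shows "integrable M (\<lambda>x::real. max (p * x + q) 0)"
  using fm_int_affine[OF M, of q p] fm_int_const[OF M, of 0] by (intro integrable_max) (auto simp: add.commute)

lemma int_max_aff': assumes M: "fin_meas_first_moment M" shows "integrable M (\<lambda>x::real. max (p * x - q) 0)"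
  using int_max_aff[OF M, of p "-q"] by simp

lemma lim_max:
  assumes M: "fin_meas_first_moment M" and p: "p = 1 \<or> p = -1"
  shows "(\<lambda>n. \<integral>x. max (p * x - real n) 0 \<partial>M) \<longlonglongrightarrow> 0"
proof -
  have meas: "(\<lambda>x. max (p * x - real n) 0) \<in> borel_measurable M" for n
    by (rule fm_meas[OF M]) measurable
  have "(\<lambda>n. \<integral>x. max (p * x - real n) 0 \<partial>M) \<longlonglongrightarrow> (\<integral>x. 0 \<partial>M)"
  proof (rule integral_dominated_convergence[where w = "\<lambda>x. \<bar>x\<bar>"])
    show "(\<lambda>x. 0::real) \<in> borel_measurable M" by simp
    show "\<And>n. (\<lambda>x. max (p * x - real n) 0) \<in> borel_measurable M" by (rule meas)
    show "integrable M (\<lambda>x. \<bar>x\<bar>)" using fm_int_id[OF M] by auto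
    show "AE x in M. (\<lambda>n. max (p * x - real n) 0) \<longlonglongrightarrow> 0"
    proof (rule AE_I2)
      fix x :: real
      obtain N :: nat where "p * x < real N" using reals_Archimedean2 by blast
      then have "\<forall>n\<ge>N. max (p * x - real n) 0 = 0" by auto
      then show "(\<lambda>n. max (p * x - real n) 0) \<longlonglongrightarrow> 0"
        by (intro tendsto_eventually eventually_sequentiallyI[of N]) auto
    qed
    show "\<And>n. AE x in M. norm (max (p * x - real n) 0) \<le> \<bar>x\<bar>"
      using p by (intro AE_I2) auto
  qed
  then show ?thesis by simp
qed

lemma bary_eq:
  assumes M: "fin_meas_first_moment \<mu>" and N: "fin_meas_first_moment \<nu>" and E: "le_E \<mu> \<nu>"
    and m: "mass \<nu> = mass \<mu>"
  shows "bary \<nu> = bary \<mu>"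
proof -
  have up: "bary \<nu> - bary \<mu> \<le> (\<integral>x. max (1 * x - real n) 0 \<partial>\<nu>)" for n
  proof -
    let ?f = "\<lambda>x::real. max (1 * x - real n) 0"
    define I1 where "I1 = (\<integral>x. ?f x \<partial>\<nu>)"
    define I2 where "I2 = (\<integral>x. ?f x \<partial>\<mu>)"
    have "?f (real n) * (mass \<nu> - mass \<mu>) + 1 * ((bary \<nu> - bary \<mu>) - real n * (mass \<nu> - mass \<mu>))
         \<le> I1 - I2" unfolding I1_def I2_def
      by (rule key[OF M N E convex_max_aff' int_max_aff'[OF M] int_max_aff'[OF N]]) auto
    moreover have "0 \<le> I2" unfolding I2_def by (intro integral_nonneg_AE) auto
    ultimately have "bary \<nu> - bary \<mu> \<le> I1" using m by simp
    then show ?thesis unfolding I1_def .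
  qed
  have lo: "bary \<mu> - bary \<nu> \<le> (\<integral>x. max (-1 * x - real n) 0 \<partial>\<nu>)" for n
  proof -
    let ?f = "\<lambda>x::real. max (-1 * x - real n) 0"
    define I1 where "I1 = (\<integral>x. ?f x \<partial>\<nu>)"
    define I2 where "I2 = (\<integral>x. ?f x \<partial>\<mu>)"
    have "?f (- real n) * (mass \<nu> - mass \<mu>) + (-1) * ((bary \<nu> - bary \<mu>) - (- real n) * (mass \<nu> - mass \<mu>))
         \<le> I1 - I2" unfolding I1_def I2_def
      by (rule key[OF M N E convex_max_aff' int_max_aff'[OF M] int_max_aff'[OF N]]) auto
    moreover have "0 \<le> I2" unfolding I2_def by (intro integral_nonneg_AE) auto
    ultimately have "bary \<mu> - bary \<nu> \<le> I1" using m by simp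
    then show ?thesis unfolding I1_def .
  qed
  have "bary \<nu> - bary \<mu> \<le> 0"
    by (rule LIMSEQ_le_const[OF lim_max[OF N, of 1]]) (use up in auto)
  moreover have "bary \<mu> - bary \<nu> \<le> 0"
    by (rule LIMSEQ_le_const[OF lim_max[OF N, of "-1"]]) (use lo in auto)
  ultimately show ?thesis by simp
qed

lemma beta_int:
  fixes f :: "real \<Rightarrow> real"
  assumes m: "mass \<nu> - mass \<mu> > 0" and f: "f \<in> borel_measurable borel"
  shows "(\<integral>x. f x \<partial>beta_meas \<mu> \<nu>) = (mass \<nu> - mass \<mu>) * f ((bary \<nu> - bary \<mu>) / (mass \<nu> - mass \<mu>))"
proof -
  define r where "r = mass \<nu> - mass \<mu>"
  define c where "c = (bary \<nu> - bary \<mu>) / (mass \<nu> - mass \<mu>)"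
  have "beta_meas \<mu> \<nu> = scale_measure (ennreal r) (return borel c)"
    using m unfolding beta_meas_def r_def c_def by auto
  also have "\<dots> = density (return borel c) (\<lambda>_. ennreal r)"
    by (rule measure_eqI) (auto simp: emeasure_density_const)
  finally have b: "beta_meas \<mu> \<nu> = density (return borel c) (\<lambda>_. ennreal r)" .
  have "(\<integral>x. f x \<partial>density (return borel c) (\<lambda>_. ennreal r)) = (\<integral>x. r *\<^sub>R f x \<partial>return borel c)"
    using m f unfolding r_def by (intro integral_density) auto
  also have "\<dots> = r * f c"
    using f by (subst integral_return) auto
  finally show ?thesis unfolding b r_def c_def .
qed


theorem corollary3p6:
  fixes \<mu> \<nu> :: "real measure"
  assumes "fin_meas_first_moment \<mu>" and "fin_meas_first_moment \<nu>"
    and "le_E \<mu> \<nu>"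
  shows "(\<forall>f::real \<Rightarrow> real. convex_on UNIV f \<and> integrable \<mu> f \<and> integrable \<nu> f \<longrightarrow>
            (\<integral>x. f x \<partial>beta_meas \<mu> \<nu>) \<le> (\<integral>x. f x \<partial>\<nu>) - (\<integral>x. f x \<partial>\<mu>))
       \<and> (\<forall>k::real. put_fun (beta_meas \<mu> \<nu>) k
                      = max ((mass \<nu> - mass \<mu>) * k - (bary \<nu> - bary \<mu>)) 0
                  \<and> put_fun (beta_meas \<mu> \<nu>) k \<le> put_fun \<nu> k - put_fun \<mu> k)"
proof -
  note M = assms(1) and N = assms(2) and E = assms(3)
  have m0: "mass \<mu> \<le> mass \<nu>" by (rule mass_le[OF M N E])
  have P1: "(\<integral>x. f x \<partial>beta_meas \<mu> \<nu>) \<le> (\<integral>x. f x \<partial>\<nu>) - (\<integral>x. f x \<partial>\<mu>)"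
    if f: "convex_on UNIV f" "integrable \<mu> f" "integrable \<nu> f" for f :: "real \<Rightarrow> real"
  proof -
    have fb: "f \<in> borel_measurable borel"
      using borel_measurable_integrable[OF f(2)] M measurable_cong_sets[of \<mu> borel borel borel]
      unfolding fin_meas_first_moment_def by metis
    show ?thesis
    proof (cases "mass \<nu> = mass \<mu>")
      case True
      have bb: "bary \<nu> = bary \<mu>" by (rule bary_eq[OF M N E True])
      obtain s where s: "\<And>y. f 0 + s * (y - 0) \<le> f y" using subgrad[OF f(1), of 0] by blast
      have "f 0 * (mass \<nu> - mass \<mu>) + s * ((bary \<nu> - bary \<mu>) - 0 * (mass \<nu> - mass \<mu>))
         \<le> (\<integral>x. f x \<partial>\<nu>) - (\<integral>x. f x \<partial>\<mu>)"
        by (rule key[OF M N E f s])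
      then show ?thesis using True bb by (simp add: beta_meas_def)
    next
      case False
      with m0 have mp: "mass \<nu> - mass \<mu> > 0" by simp
      define c where "c = (bary \<nu> - bary \<mu>) / (mass \<nu> - mass \<mu>)"
      have cm: "c * (mass \<nu> - mass \<mu>) = bary \<nu> - bary \<mu>" using mp unfolding c_def by simp
      obtain s where s: "\<And>y. f c + s * (y - c) \<le> f y" using subgrad[OF f(1), of c] by blast
      have "f c * (mass \<nu> - mass \<mu>) + s * ((bary \<nu> - bary \<mu>) - c * (mass \<nu> - mass \<mu>))
         \<le> (\<integral>x. f x \<partial>\<nu>) - (\<integral>x. f x \<partial>\<mu>)"
        by (rule key[OF M N E f s])
      then show ?thesis using beta_int[OF mp fb] cm unfolding c_def by (simp add: mult.commute)
    qed
  qed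
  have P2: "put_fun (beta_meas \<mu> \<nu>) k = max ((mass \<nu> - mass \<mu>) * k - (bary \<nu> - bary \<mu>)) 0" for k
  proof (cases "mass \<nu> = mass \<mu>")
    case True
    then show ?thesis using bary_eq[OF M N E True] by (simp add: beta_meas_def put_fun_def)
  next
    case False
    with m0 have mp: "mass \<nu> - mass \<mu> > 0" by simp
    have fb: "(\<lambda>x::real. max (k - x) 0) \<in> borel_measurable borel" by measurable
    have "put_fun (beta_meas \<mu> \<nu>) k = (mass \<nu> - mass \<mu>) * max (k - (bary \<nu> - bary \<mu>) / (mass \<nu> - mass \<mu>)) 0"
      unfolding put_fun_def using beta_int[OF mp fb] by simp
    also have "\<dots> = max ((mass \<nu> - mass \<mu>) * (k - (bary \<nu> - bary \<mu>) / (mass \<nu> - mass \<mu>))) 0"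
      using mp by (simp add: max_mult_distrib_left)
    also have "(mass \<nu> - mass \<mu>) * (k - (bary \<nu> - bary \<mu>) / (mass \<nu> - mass \<mu>)) = (mass \<nu> - mass \<mu>) * k - (bary \<nu> - bary \<mu>)"
      using mp by (simp add: field_simps)
    finally show ?thesis .
  qed
  have P3: "put_fun (beta_meas \<mu> \<nu>) k \<le> put_fun \<nu> k - put_fun \<mu> k" for k
  proof -
    have c: "convex_on UNIV (\<lambda>x::real. max (-1 * x - (-k)) 0)" by (rule convex_max_aff')
    have i1: "integrable \<mu> (\<lambda>x::real. max (-1 * x - (-k)) 0)" by (rule int_max_aff'[OF M])
    have i2: "integrable \<nu> (\<lambda>x::real. max (-1 * x - (-k)) 0)" by (rule int_max_aff'[OF N])
    have e: "(\<lambda>x::real. max (-1 * x - (-k)) 0) = (\<lambda>x. max (k - x) 0)" by auto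
    show ?thesis using P1[OF c i1 i2] unfolding e put_fun_def .
  qed
  show ?thesis using P1 P2 P3 by blast
qed

end
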